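(* Let $\mathcal{I}\in\mathbb{R}^{H\times W\times U}$ be a hyperspectral image and let $\mathcal{D}_{\mathcal{I}}=\{(B_i,y_i)\}_{i=1}^{M}$ be the dataset of cuboids built from it, where $B_i\in\mathbb{R}^{P\times P\times U}$ is the cuboid centred at the $i$-th pixel and $y_i\in\mathcal{Y}=\{1,\dots,K\}$ is the label of that central pixel. Suppose $\mathcal{D}_{\mathcal{I}}$ is partitioned into $\mathcal{D}_{\text{train}}$, $\mathcal{D}_{\text{val}}$, and a set $\mathcal{D}_{\text{cal}}\cup\mathcal{D}_{\text{test}}$, where the split of $\mathcal{D}_{\text{cal}}\cup\mathcal{D}_{\text{test}}$ into the calibration set $\mathcal{D}_{\text{cal}}=\{(B_i,y_i)\}_{i=1}^n$ and the test set $\mathcal{D}_{\text{test}}=\{(B_{n+j},y_{n+j})\}_{j=1}^m$ is made uniformly at random. Let $S:(B,y)\mapsto S(B,y)\in\mathbb{R}$ be a non-conformity score function derived from a pre-trained HSI classifier (which may have been trained with access to the whole image, including pixels of calibration and test cuboids), and assume that for every cuboid $B$ and every label $y\in\mathcal{Y}$, the value $S(B,y)$ is invariant under any permutation of the union $\mathcal{D}_{\text{cal}}\cup\mathcal{D}_{\text{test}}$ (i.e., it does not depend on which elements of this union are designated as calibration versus test samples). Define $s_i:=S(B_i,y_i)$ for $i=1,\dots,n+m$. Then the calibration scores $\{s_i\}_{i=1}^n$ and the test scores $\{s_{n+j}\}_{j=1}^m$ are exchangeable.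
   Context: A non-conformity score function $S(B,y)$ measures how poorly label $y$ conforms to the classifier's prediction at cuboid $B$ (e.g., computed from the classifier's softmax probabilities $\hat\pi_\theta(B)$ and label ranks). A finite sequence of random variables is exchangeable if its joint distribution is invariant under every permutation of the indices. *)

theory Defs
  imports "HOL-Probability.Probability"
begin

text \<open>A random finite sequence (x_0,...,x_{N-1}), represented as a distribution on
  functions nat => 'a (only indices below N matter), is exchangeable if its joint
  distribution is invariant under every permutation of the indices {0..<N}.\<close>
definition exchangeable :: "nat \<Rightarrow> (nat \<Rightarrow> 'a) pmf \<Rightarrow> bool" where
  "exchangeable N D \<longleftrightarrow>
     (\<forall>\<pi>. \<pi> permutes {..<N} \<longrightarrow> map_pmf (\<lambda>x. x \<circ> \<pi>) D = D)"

text \<open>Uniformly random arrangement of the pooled calibration+test data: position i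
  receives pool element sigma i, positions 0..<n are calibration, n..<n+m are test.\<close>
definition random_arrangement :: "nat \<Rightarrow> (nat \<Rightarrow> nat) pmf" where
  "random_arrangement N = pmf_of_set {\<sigma>. \<sigma> permutes {..<N}}"

text \<open>Scores s_i = S(B_i, y_i) of the arranged data. The score function may depend on
  the whole arranged dataset (first argument), e.g. through the classifier.\<close>
definition arranged_scores ::
  "nat \<Rightarrow> ((nat \<Rightarrow> 'b \<times> nat) \<Rightarrow> 'b \<Rightarrow> nat \<Rightarrow> real) \<Rightarrow> (nat \<Rightarrow> 'b \<times> nat)
     \<Rightarrow> (nat \<Rightarrow> nat) \<Rightarrow> nat \<Rightarrow> real" where
  "arranged_scores N S z \<sigma> = (\<lambda>i. if i < N
       then S (z \<circ> \<sigma>) (fst (z (\<sigma> i))) (snd (z (\<sigma> i))) else 0)"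

end

theory Submission
  imports Defs
begin

theorem theorem2:
  fixes n m K :: nat
    and z :: "nat \<Rightarrow> 'b \<times> nat"
    and S :: "(nat \<Rightarrow> 'b \<times> nat) \<Rightarrow> 'b \<Rightarrow> nat \<Rightarrow> real"
  assumes labels: "\<And>i. i < n + m \<Longrightarrow> snd (z i) \<in> {1..K}"
    and invariant: "\<And>\<pi>. \<pi> permutes {..<n + m} \<Longrightarrow> S (z \<circ> \<pi>) = S z"
  shows "exchangeable (n + m)
           (map_pmf (arranged_scores (n + m) S z) (random_arrangement (n + m)))"
  unfolding exchangeable_def
proof (intro allI impI)
  fix \<pi> :: "nat \<Rightarrow> nat"
  assume pi: "\<pi> permutes {..<n + m}"
  define N where "N = n + m"
  define P where "P = {\<sigma>. \<sigma> permutes {..<N}}"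
  define g where "g = arranged_scores N S z"
  have fin: "finite P" unfolding P_def by (rule finite_permutations) simp
  have ne: "P \<noteq> {}" unfolding P_def using permutes_id by blast
  have U: "random_arrangement N = pmf_of_set P" unfolding random_arrangement_def P_def ..
  have piN: "\<pi> permutes {..<N}" using pi N_def by simp
  have key: "g \<sigma> \<circ> \<pi> = g (\<sigma> \<circ> \<pi>)" if s: "\<sigma> \<in> P" for \<sigma>
  proof
    fix i
    have sp: "\<sigma> permutes {..<N}" using s P_def by simp
    have sp2: "\<sigma> \<circ> \<pi> permutes {..<N}" using permutes_compose[OF piN sp] .
    have e1: "S (z \<circ> \<sigma>) = S z" using invariant sp N_def by simp
    have e2: "S (z \<circ> (\<sigma> \<circ> \<pi>)) = S z" using invariant sp2 N_def by simp
    have lt: "(\<pi> i < N) = (i < N)" using piN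
      by (metis lessThan_iff permutes_in_image)
    show "(g \<sigma> \<circ> \<pi>) i = g (\<sigma> \<circ> \<pi>) i"
      unfolding g_def arranged_scores_def using e1 e2 lt by simp
  qed
  have inj: "inj_on (\<lambda>\<sigma>. \<sigma> \<circ> \<pi>) P"
    by (metis (no_types, lifting) inj_onI permutes_surj pi fun.map_comp comp_id
        permutes_inv_o(1))
  have img: "(\<lambda>\<sigma>. \<sigma> \<circ> \<pi>) ` P = P"
  proof
    show "(\<lambda>\<sigma>. \<sigma> \<circ> \<pi>) ` P \<subseteq> P" unfolding P_def using permutes_compose[OF piN] by blast
    show "P \<subseteq> (\<lambda>\<sigma>. \<sigma> \<circ> \<pi>) ` P"
    proof
      fix \<tau> assume t: "\<tau> \<in> P"
      have "\<tau> \<circ> inv \<pi> \<in> P" using t unfolding P_def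
        using permutes_compose[OF permutes_inv[OF piN]] by blast
      moreover have "\<tau> = (\<tau> \<circ> inv \<pi>) \<circ> \<pi>"
        using permutes_inv_o(2)[OF piN] by (simp add: comp_assoc)
      ultimately show "\<tau> \<in> (\<lambda>\<sigma>. \<sigma> \<circ> \<pi>) ` P" by blast
    qed
  qed
  have "map_pmf (\<lambda>x. x \<circ> \<pi>) (map_pmf g (pmf_of_set P))
        = map_pmf (\<lambda>\<sigma>. g \<sigma> \<circ> \<pi>) (pmf_of_set P)"
    by (simp add: pmf.map_comp o_def)
  also have "\<dots> = map_pmf (\<lambda>\<sigma>. g (\<sigma> \<circ> \<pi>)) (pmf_of_set P)"
    by (rule map_pmf_cong) (auto simp: fin ne key)
  also have "\<dots> = map_pmf g (map_pmf (\<lambda>\<sigma>. \<sigma> \<circ> \<pi>) (pmf_of_set P))"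
    by (simp add: pmf.map_comp o_def)
  also have "map_pmf (\<lambda>\<sigma>. \<sigma> \<circ> \<pi>) (pmf_of_set P) = pmf_of_set P"
    using map_pmf_of_set_inj[OF inj ne fin] img by simp
  finally show "map_pmf (\<lambda>x. x \<circ> \<pi>) (map_pmf (arranged_scores (n + m) S z)
      (random_arrangement (n + m))) = map_pmf (arranged_scores (n + m) S z) (random_arrangement (n + m))"
    using U unfolding g_def N_def by (simp add: o_def)
qed

end
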